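(* Let $\mathbb E$ be a Banach space, $\hat\varphi(x)\in\mathbb E[[x]]$, $k\in\mathbb N$ and $s>0$. Then $$(\partial^{-1}_{\Gamma_s,x})^k\hat\varphi(x)=-\int_0^{x^{1/s}}\hat\varphi(y^s)\,\partial_y\frac{(x^{1/s}-y)^{ks}}{\Gamma_s(k)}\,dy,$$ where the right-hand side is understood term by term in the power series expansion of $\hat\varphi$.
   Context: $\Gamma_s(u):=\Gamma(1+su)$ for $s>0$. The $\Gamma_s$-moment integration operator is defined on $\mathbb E[[x]]$ by $\partial^{-1}_{\Gamma_s,x}\big(\sum_{j\ge0}\frac{u_j}{\Gamma_s(j)}x^j\big):=\sum_{j\ge1}\frac{u_{j-1}}{\Gamma_s(j)}x^j$. *)

theory Defs
  imports "HOL-Analysis.Analysis" "HOL-Computational_Algebra.Formal_Power_Series"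
begin

definition Gamma_s :: "real \<Rightarrow> real \<Rightarrow> real" where
  "Gamma_s s u = Gamma (1 + s * u)"

text \<open>A series
  sum_j (u_j / Gamma_s(j)) x^j has coefficients a_j = u_j / Gamma_s(j), i.e.
  u_j = Gamma_s(j) a_j; the image has coefficient u_(j-1) / Gamma_s(j) at j >= 1
  and 0 at j = 0.\<close>
definition moment_int :: "real \<Rightarrow> 'a::real_vector fps \<Rightarrow> 'a fps" where
  "moment_int s f = Abs_fps (\<lambda>j. if j = 0 then 0
      else (1 / Gamma_s s (real j)) *\<^sub>R (Gamma_s s (real (j - 1)) *\<^sub>R (fps_nth f (j - 1))))"

end

theory Submission
  imports Defs
begin

lemma Gs_pos: "s > 0 \<Longrightarrow> Gamma_s s (real n) > 0"
  unfolding Gamma_s_def by (intro Gamma_real_pos) (simp add: add_pos_nonneg)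

lemma moment_int_nth: "fps_nth (moment_int s f) j = (if j = 0 then 0
      else (1 / Gamma_s s (real j)) *\<^sub>R (Gamma_s s (real (j - 1)) *\<^sub>R (fps_nth f (j - 1))))"
  unfolding moment_int_def by simp

lemma coeff_iter:
  assumes "s > 0"
  shows "fps_nth ((moment_int s ^^ k) phi) n =
    (if n < k then 0 else (Gamma_s s (real (n - k)) / Gamma_s s (real n)) *\<^sub>R fps_nth phi (n - k))"
proof (induction k arbitrary: n)
  case 0
  then show ?case using Gs_pos[OF assms, of n] by simp
next
  case (Suc k)
  have e: "fps_nth ((moment_int s ^^ Suc k) phi) n = fps_nth (moment_int s ((moment_int s ^^ k) phi)) n"
    by simp
  show ?case
  proof (cases "n < Suc k")
    case True
    then show ?thesis unfolding e moment_int_nth by (auto simp add: Suc.IH)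
  next
    case False
    then obtain m where m: "n = Suc m" "k \<le> m" by (cases n) auto
    have "Gamma_s s (real m) \<noteq> 0" using Gs_pos[OF assms, of m] by simp
    then show ?thesis using m False unfolding e moment_int_nth
      by (simp add: Suc.IH Suc_diff_le)
  qed
qed

lemma deriv_kern:
  fixes X b G :: real
  assumes "z < X" "b > 0" "G \<noteq> 0"
  shows "deriv (\<lambda>z. (X - z) powr b / G) z = - (b * (X - z) powr (b - 1)) / G"
proof (rule DERIV_imp_deriv)
  show "((\<lambda>z. (X - z) powr b / G) has_real_derivative - (b * (X - z) powr (b - 1)) / G) (at z)"
    using assms by (auto intro!: derivative_eq_intros)
qed

lemma beta_scaled:
  fixes a b X :: real
  assumes a: "a \<ge> 0" and b: "b > 0" and X: "X > 0"
  shows "((\<lambda>y. y powr a * (X - y) powr (b - 1)) has_integral X powr (a + b) * Beta (a + 1) b) {0..X}"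
proof -
  define f where "f = (\<lambda>t::real. t powr a * (1 - t) powr (b - 1))"
  have "(f has_integral Beta (a + 1) b) (cbox 0 1)"
    using has_integral_Beta_real[of "a+1" b] a b by (simp add: f_def)
  from has_integral_affinity'[OF this, of "1/X" 0] X
  have "((\<lambda>y. f (y / X)) has_integral X * Beta (a + 1) b) {0..X}"
    by (simp add: field_simps)
  from has_integral_mult_right[OF this, of "X powr (a + b - 1)"]
  have h: "((\<lambda>y. X powr (a + b - 1) * f (y / X)) has_integral X powr (a + b) * Beta (a + 1) b) {0..X}"
  proof -
    have "X powr (a + b - 1) * (X * Beta (a + 1) b) = X powr (a + b) * Beta (a + 1) b"
      using X by (simp add: powr_diff field_simps)
    then show ?thesis using \<open>((\<lambda>y. X powr (a + b - 1) * f (y / X)) has_integral _) _\<close> by metis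
  qed
  show ?thesis
  proof (rule has_integral_spike_finite[OF _ _ h, of "{0, X}"])
    show "finite {0, X}" by simp
    fix y assume y: "y \<in> {0..X} - {0, X}"
    then have y0: "y > 0" "y < X" by auto
    have "f (y / X) = (y powr a / X powr a) * ((X - y) powr (b - 1) / X powr (b - 1))"
    proof -
      have "1 - y / X = (X - y) / X" using X by (simp add: field_simps)
      then show ?thesis unfolding f_def using y0 X by (simp add: powr_divide)
    qed
    moreover have "X powr (a + b - 1) = X powr a * X powr (b - 1)"
      by (simp add: powr_add[symmetric] add_diff_eq)
    ultimately show "y powr a * (X - y) powr (b - 1) = X powr (a + b - 1) * f (y / X)"
      using X by (simp add: field_simps)
  qed
qed

lemma main_int:
  fixes phi :: "'a::banach fps" and k :: nat and s x :: real
  assumes s: "s > 0" and k: "k \<ge> 1" and x: "x > 0"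
  shows "((\<lambda>y. (((y powr s) ^ j) *
                    deriv (\<lambda>z. (x powr (1 / s) - z) powr (real k * s) / Gamma_s s (real k)) y)
                   *\<^sub>R (fps_nth phi j)) has_integral
          - ((x ^ (j + k) * (Gamma_s s (real j) / Gamma_s s (real (j + k)))) *\<^sub>R fps_nth phi j))
         {0 .. x powr (1 / s)}"
proof -
  define X where "X = x powr (1 / s)"
  define b where "b = real k * s"
  define G where "G = Gamma_s s (real k)"
  have X: "X > 0" using x by (simp add: X_def)
  have b: "b > 0" using s k by (simp add: b_def)
  have G: "G > 0" using Gs_pos[OF s, of k] by (simp add: G_def)
  have h1: "((\<lambda>y. y powr (s * j) * (X - y) powr (b - 1)) has_integral X powr (s * j + b) * Beta (s * j + 1) b) {0..X}"
    using beta_scaled[of "s * j" b X] s b X by simp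
  have h2: "((\<lambda>y. (- b / G * (y powr (s * j) * (X - y) powr (b - 1))) *\<^sub>R fps_nth phi j) has_integral
      (- b / G * (X powr (s * j + b) * Beta (s * j + 1) b)) *\<^sub>R fps_nth phi j) {0..X}"
    by (intro has_integral_scaleR_left has_integral_mult_right h1)
  have val: "- b / G * (X powr (s * j + b) * Beta (s * j + 1) b) =
     - (x ^ (j + k) * (Gamma_s s (real j) / Gamma_s s (real (j + k))))"
  proof -
    have "X powr (s * j + b) = x ^ (j + k)"
    proof -
      have e: "(1 / s) * (s * j + b) = real (j + k)" using s by (simp add: b_def field_simps)
      have "X powr (s * j + b) = x powr ((1 / s) * (s * j + b))" unfolding X_def by (simp add: powr_powr)
      also have "\<dots> = x ^ (j + k)" unfolding e using x by (metis powr_realpow)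
      finally show ?thesis .
    qed
    moreover have "b * Beta (s * j + 1) b = G * (Gamma_s s (real j) / Gamma_s s (real (j + k)))"
    proof -
      have "b \<notin> \<int>\<^sub>\<le>\<^sub>0" using b by (auto elim!: nonpos_Ints_cases)
      then have "b * Gamma b = Gamma (b + 1)" by (simp add: Gamma_plus1)
      moreover have "Gamma (b + 1) = G" unfolding G_def Gamma_s_def b_def by (simp add: algebra_simps)
      moreover have "Gamma (s * j + 1 + b) = Gamma_s s (real (j + k))"
        unfolding Gamma_s_def b_def by (simp add: algebra_simps)
      moreover have "Gamma (s * j + 1) = Gamma_s s (real j)"
        unfolding Gamma_s_def by (simp add: algebra_simps)
      ultimately show ?thesis unfolding Beta_def by (simp add: field_simps)
    qed
    ultimately show ?thesis using G
    proof -
      assume A: "X powr (s * j + b) = x ^ (j + k)"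
        and B: "b * Beta (s * j + 1) b = G * (Gamma_s s (real j) / Gamma_s s (real (j + k)))"
      have "- b / G * (X powr (s * j + b) * Beta (s * j + 1) b) = - (X powr (s * j + b) * (b * Beta (s * j + 1) b)) / G"
        by simp
      also have "\<dots> = - (x ^ (j + k) * (Gamma_s s (real j) / Gamma_s s (real (j + k))))"
        unfolding A B using G by simp
      finally show ?thesis .
    qed
  qed
  have h3: "((\<lambda>y. (- b / G * (y powr (s * j) * (X - y) powr (b - 1))) *\<^sub>R fps_nth phi j) has_integral
      - ((x ^ (j + k) * (Gamma_s s (real j) / Gamma_s s (real (j + k)))) *\<^sub>R fps_nth phi j)) {0..X}"
    using h2 unfolding val by (simp only: scaleR_minus_left)
  show ?thesis unfolding X_def[symmetric] b_def[symmetric] G_def[symmetric]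
  proof (rule has_integral_spike_finite[OF _ _ h3, of "{0, X}"])
    show "finite {0, X}" by simp
    fix y assume y: "y \<in> {0..X} - {0, X}"
    then have y0: "y > 0" "y < X" by auto
    have "(y powr s) ^ j = y powr (s * j)"
      using y0 by (simp add: powr_realpow[symmetric] powr_powr)
    moreover have "deriv (\<lambda>z. (X - z) powr b / G) y = - (b * (X - y) powr (b - 1)) / G"
      using deriv_kern[of y X b G] y0 b G by simp
    ultimately show "((y powr s) ^ j * deriv (\<lambda>z. (X - z) powr b / G) y) *\<^sub>R fps_nth phi j =
        (- b / G * (y powr (s * j) * (X - y) powr (b - 1))) *\<^sub>R fps_nth phi j"
      by (simp add: field_simps)
  qed
qed

theorem lemma2:
  fixes phi :: "'a::banach fps" and k :: nat and s :: real
  assumes "s > 0" and "k \<ge> 1"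
  shows "(\<forall>n<k. fps_nth ((moment_int s ^^ k) phi) n = 0) \<and>
         (\<forall>j. \<forall>x::real. x > 0 \<longrightarrow>
            (\<lambda>y. (((y powr s) ^ j) *
                    deriv (\<lambda>z. (x powr (1 / s) - z) powr (real k * s) / Gamma_s s (real k)) y)
                   *\<^sub>R (fps_nth phi j)) integrable_on {0 .. x powr (1 / s)}
          \<and> (x ^ (j + k)) *\<^sub>R (fps_nth ((moment_int s ^^ k) phi) (j + k)) =
            - integral {0 .. x powr (1 / s)}
               (\<lambda>y. (((y powr s) ^ j) *
                    deriv (\<lambda>z. (x powr (1 / s) - z) powr (real k * s) / Gamma_s s (real k)) y)
                   *\<^sub>R (fps_nth phi j)))"
proof (intro conjI allI impI)
  fix n assume "n < k"
  then show "fps_nth ((moment_int s ^^ k) phi) n = 0" by (simp add: coeff_iter[OF assms(1)])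
next
  fix j and x :: real assume x: "x > 0"
  note h = main_int[OF assms x, of j phi]
  from h show "(\<lambda>y. (((y powr s) ^ j) *
                    deriv (\<lambda>z. (x powr (1 / s) - z) powr (real k * s) / Gamma_s s (real k)) y)
                   *\<^sub>R (fps_nth phi j)) integrable_on {0 .. x powr (1 / s)}"
    by blast
  from integral_unique[OF h]
  show "(x ^ (j + k)) *\<^sub>R (fps_nth ((moment_int s ^^ k) phi) (j + k)) =
            - integral {0 .. x powr (1 / s)}
               (\<lambda>y. (((y powr s) ^ j) *
                    deriv (\<lambda>z. (x powr (1 / s) - z) powr (real k * s) / Gamma_s s (real k)) y)
                   *\<^sub>R (fps_nth phi j))"
    by (simp add: coeff_iter[OF assms(1)])
qed

end
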